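(* For all $n\ge 4$, there is no perfect lattice code in $\mathcal{A}(n,n-2,1)$.
   Context: For integers $n\ge 1$, $0\le t\le n$, $\ell\ge 1$, let $\mathcal{S}(n,t,\ell)=\{\mathcal{E}\in\mathbb{Z}^n: 0\le\varepsilon_i\le\ell \text{ for all } i,\ w_H(\mathcal{E})\le t\}$, where $w_H$ is the number of nonzero coordinates. A lattice here is the set of integer combinations of $n$ linearly independent vectors of $\mathbb{Z}^n$. $\mathcal{A}(n,t,\ell)$ is the set of lattices $\mathcal{L}\subseteq\mathbb{Z}^n$ such that the translates $X+\mathcal{S}(n,t,\ell)$, $X\in\mathcal{L}$, are pairwise disjoint. Such $\mathcal{L}$ is perfect if these translates also cover $\mathbb{Z}^n$. *)

theory Defs
  imports "HOL-Analysis.Analysis"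
begin

text \<open>Vectors of Z^n are modelled as functions nat => int vanishing outside {0..<n}.\<close>

definition zvec :: "nat \<Rightarrow> (nat \<Rightarrow> int) set" where
  "zvec n = {x. \<forall>i\<ge>n. x i = 0}"

definition hamming_weight :: "nat \<Rightarrow> (nat \<Rightarrow> int) \<Rightarrow> nat" where
  "hamming_weight n x = card {i. i < n \<and> x i \<noteq> 0}"

definition errS :: "nat \<Rightarrow> nat \<Rightarrow> nat \<Rightarrow> (nat \<Rightarrow> int) set" where
  "errS n t l = {e \<in> zvec n. (\<forall>i<n. 0 \<le> e i \<and> e i \<le> int l) \<and> hamming_weight n e \<le> t}"

definition is_lattice :: "nat \<Rightarrow> (nat \<Rightarrow> int) set \<Rightarrow> bool" where
  "is_lattice n L \<longleftrightarrow> (\<exists>b :: nat \<Rightarrow> nat \<Rightarrow> int.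
      (\<forall>j<n. b j \<in> zvec n) \<and>
      (\<forall>c :: nat \<Rightarrow> real. (\<forall>i<n. (\<Sum>j<n. c j * of_int (b j i)) = 0) \<longrightarrow> (\<forall>j<n. c j = 0)) \<and>
      L = {(\<lambda>i. \<Sum>j<n. c j * b j i) | c :: nat \<Rightarrow> int. True})"

definition translate :: "(nat \<Rightarrow> int) \<Rightarrow> (nat \<Rightarrow> int) set \<Rightarrow> (nat \<Rightarrow> int) set" where
  "translate X S = {(\<lambda>i. X i + e i) | e. e \<in> S}"

definition latA :: "nat \<Rightarrow> nat \<Rightarrow> nat \<Rightarrow> (nat \<Rightarrow> int) set set" where
  "latA n t l = {L. is_lattice n L \<and>
     (\<forall>X\<in>L. \<forall>Y\<in>L. X \<noteq> Y \<longrightarrow> translate X (errS n t l) \<inter> translate Y (errS n t l) = {})}"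

definition perfect :: "nat \<Rightarrow> nat \<Rightarrow> nat \<Rightarrow> (nat \<Rightarrow> int) set \<Rightarrow> bool" where
  "perfect n t l L \<longleftrightarrow> (\<Union>X\<in>L. translate X (errS n t l)) = zvec n"

end

theory Submission
  imports Defs
begin

lemma two_avoid:
  assumes "(n::nat) \<ge> 4" "a < n" "b < n"
  shows "\<exists>j1 j2. j1<n \<and> j2<n \<and> j1\<noteq>j2 \<and> j1\<noteq>a \<and> j1\<noteq>b \<and> j2\<noteq>a \<and> j2\<noteq>b"
proof -
  have "card ({0,1,2,3::nat} - {a,b}) \<ge> 2"
  proof -
    have "card ({0,1,2,3::nat} - {a,b}) \<ge> card {0,1,2,3::nat} - card {a,b}" by (rule diff_card_le_card_Diff) auto
    moreover have "card {a,b} \<le> 2" by (simp add: card_insert_if)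
    ultimately show ?thesis by simp
  qed
  then obtain j1 j2 where "j1 \<in> {0,1,2,3::nat} - {a,b}" "j2 \<in> {0,1,2,3::nat} - {a,b}" "j1\<noteq>j2"
    by (metis card_le_Suc0_iff_eq not_less_eq_eq numeral_2_eq_2 finite_Diff finite.intros)
  then show ?thesis using assms by (intro exI[of _ j1] exI[of _ j2]) auto
qed

lemma lat_basis:
  assumes "is_lattice n L"
  obtains b where "\<forall>j<n. b j \<in> zvec n" "L = {(\<lambda>i. \<Sum>j<n. c j * b j i) | c :: nat \<Rightarrow> int. True}"
  using assms unfolding is_lattice_def by blast

lemma lat_add:
  assumes "is_lattice n L" "X \<in> L" "Y \<in> L"
  shows "(\<lambda>i. X i + Y i) \<in> L"
proof -
  obtain b where L: "L = {(\<lambda>i. \<Sum>j<n. c j * b j i) | c :: nat \<Rightarrow> int. True}"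
    using lat_basis[OF assms(1)] by blast
  from assms(2) L obtain c where X: "X = (\<lambda>i. \<Sum>j<n. c j * b j i)" by blast
  from assms(3) L obtain d where Y: "Y = (\<lambda>i. \<Sum>j<n. d j * b j i)" by blast
  have eq: "(\<lambda>i. X i + Y i) = (\<lambda>i. \<Sum>j<n. (\<lambda>j. c j + d j) j * b j i)"
    by (simp add: X Y sum.distrib[symmetric] algebra_simps)
  show ?thesis unfolding L mem_Collect_eq by (rule exI[of _ "\<lambda>j. c j + d j"]) (use eq in simp)
qed

lemma lat_diff:
  assumes "is_lattice n L" "X \<in> L" "Y \<in> L"
  shows "(\<lambda>i. X i - Y i) \<in> L"
proof -
  obtain b where L: "L = {(\<lambda>i. \<Sum>j<n. c j * b j i) | c :: nat \<Rightarrow> int. True}"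
    using lat_basis[OF assms(1)] by blast
  from assms(2) L obtain c where X: "X = (\<lambda>i. \<Sum>j<n. c j * b j i)" by blast
  from assms(3) L obtain d where Y: "Y = (\<lambda>i. \<Sum>j<n. d j * b j i)" by blast
  have eq: "(\<lambda>i. X i - Y i) = (\<lambda>i. \<Sum>j<n. (\<lambda>j. c j - d j) j * b j i)"
    by (simp add: X Y sum_subtractf[symmetric] algebra_simps)
  show ?thesis unfolding L mem_Collect_eq by (rule exI[of _ "\<lambda>j. c j - d j"]) (use eq in simp)
qed

lemma lat_zero:
  assumes "is_lattice n L"
  shows "(\<lambda>i. 0::int) \<in> L"
proof -
  obtain b where L: "L = {(\<lambda>i. \<Sum>j<n. c j * b j i) | c :: nat \<Rightarrow> int. True}"
    using lat_basis[OF assms(1)] by blast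
  have eq: "(\<lambda>i. 0::int) = (\<lambda>i. \<Sum>j<n. (\<lambda>j. 0::int) j * b j i)" by simp
  show ?thesis unfolding L mem_Collect_eq by (rule exI[of _ "\<lambda>j. 0::int"]) (use eq in simp)
qed

lemma lat_zvec:
  assumes "is_lattice n L" "X \<in> L" "i \<ge> n"
  shows "X i = 0"
proof -
  obtain b where B: "\<forall>j<n. b j \<in> zvec n" and L: "L = {(\<lambda>i. \<Sum>j<n. c j * b j i) | c :: nat \<Rightarrow> int. True}"
    using lat_basis[OF assms(1)] by blast
  from assms(2) L obtain c where X: "X = (\<lambda>i. \<Sum>j<n. c j * b j i)" by blast
  have "\<forall>j<n. b j i = 0" using B assms(3) unfolding zvec_def by auto
  then show ?thesis by (simp add: X)
qed

lemma errS_vals: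
  assumes "e \<in> errS n t 1"
  shows "\<And>i. i < n \<Longrightarrow> e i = 0 \<or> e i = 1" and "\<And>i. i \<ge> n \<Longrightarrow> e i = 0"
  using assms unfolding errS_def zvec_def by force+

lemma zeros2:
  assumes "e \<in> errS n (n-2) 1" "n \<ge> 2"
  shows "\<exists>p q. p<n \<and> q<n \<and> p\<noteq>q \<and> e p = 0 \<and> e q = 0"
proof (rule ccontr)
  assume H: "\<not> ?thesis"
  let ?Z = "{i. i<n \<and> e i = 0}"
  let ?N = "{i. i<n \<and> e i \<noteq> 0}"
  have z: "card ?Z \<le> Suc 0" using H by (subst card_le_Suc0_iff_eq) auto
  have nn: "card ?N \<le> n-2" using assms(1) unfolding errS_def hamming_weight_def by auto
  have "{..<n} = ?Z \<union> ?N" by auto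
  then have "n = card (?Z \<union> ?N)" by (metis card_lessThan)
  also have "\<dots> = card ?Z + card ?N" by (rule card_Un_disjoint) auto
  finally show False using z nn assms(2) by linarith
qed

lemma NP:
  assumes LA: "L \<in> latA n (n-2) 1" and XL: "X \<in> L"
    and vals: "\<forall>i<n. X i = -1 \<or> X i = 0 \<or> X i = 1"
    and "i1<n" "i2<n" "i1\<noteq>i2" "X i1 \<noteq> 1" "X i2 \<noteq> 1"
    and "j1<n" "j2<n" "j1\<noteq>j2" "X j1 \<noteq> -1" "X j2 \<noteq> -1"
    and "k<n" "X k \<noteq> 0"
  shows False
proof -
  let ?S = "errS n (n-2) 1"
  have lat: "is_lattice n L" and disj: "\<forall>X\<in>L. \<forall>Y\<in>L. X \<noteq> Y \<longrightarrow> translate X ?S \<inter> translate Y ?S = {}"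
    using LA unfolding latA_def by auto
  have zX: "\<And>i. i \<ge> n \<Longrightarrow> X i = 0" using lat_zvec[OF lat XL] by blast
  define a where "a = (\<lambda>i. max (X i) 0)"
  define b where "b = (\<lambda>i. max (- X i) 0)"
  have cD: "card ({..<n} - {i1,i2}) = n - 2"
    using assms by (subst card_Diff_subset) auto
  have cD2: "card ({..<n} - {j1,j2}) = n - 2"
    using assms by (subst card_Diff_subset) auto
  have aS: "a \<in> ?S"
  proof -
    have "{i. i<n \<and> a i \<noteq> 0} \<subseteq> {..<n} - {i1,i2}" using assms by (auto simp: a_def)
    then have "card {i. i<n \<and> a i \<noteq> 0} \<le> n - 2" using cD by (metis card_mono finite_Diff finite_lessThan)
    moreover have "\<forall>i<n. 0 \<le> a i \<and> a i \<le> 1" using vals by (auto simp: a_def)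
    moreover have "a \<in> zvec n" using zX by (auto simp: a_def zvec_def)
    ultimately show ?thesis unfolding errS_def hamming_weight_def by auto
  qed
  have bS: "b \<in> ?S"
  proof -
    have "{i. i<n \<and> b i \<noteq> 0} \<subseteq> {..<n} - {j1,j2}" using assms by (auto simp: b_def)
    then have "card {i. i<n \<and> b i \<noteq> 0} \<le> n - 2" using cD2 by (metis card_mono finite_Diff finite_lessThan)
    moreover have "\<forall>i<n. 0 \<le> b i \<and> b i \<le> 1" using vals by (auto simp: b_def)
    moreover have "b \<in> zvec n" using zX by (auto simp: b_def zvec_def)
    ultimately show ?thesis unfolding errS_def hamming_weight_def by auto
  qed
  have 1: "(\<lambda>i. X i + b i) \<in> translate X ?S" unfolding translate_def using bS by blast
  have eq: "(\<lambda>i. X i + b i) = (\<lambda>i. (\<lambda>i. 0::int) i + a i)" by (auto simp: a_def b_def max_def)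
  have 2: "(\<lambda>i. (\<lambda>i. 0::int) i + a i) \<in> translate (\<lambda>i. 0) ?S" unfolding translate_def using aS by blast
  have ne: "X \<noteq> (\<lambda>i. 0)" using assms by auto
  have "translate X ?S \<inter> translate (\<lambda>i. 0) ?S = {}"
    using disj[rule_format, OF XL lat_zero[OF lat] ne] .
  moreover have "(\<lambda>i. X i + b i) \<in> translate (\<lambda>i. 0) ?S" using 2 eq by simp
  ultimately show False using 1 by blast
qed

lemma COVER:
  assumes "perfect n t l L" "v \<in> zvec n"
  shows "\<exists>X\<in>L. \<exists>e\<in>errS n t l. \<forall>i. v i = X i + e i"
proof -
  from assms obtain X where "X \<in> L" "v \<in> translate X (errS n t l)" unfolding perfect_def by blast
  then show ?thesis unfolding translate_def by auto
qed

lemma COVU: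
  assumes LA: "L \<in> latA n (n-2) 1" and P: "perfect n (n-2) 1 L" and n4: "n \<ge> 4" and k: "k < n"
  shows "\<exists>Z\<in>L. (\<forall>m<n. m\<noteq>k \<longrightarrow> Z m = 1) \<and> (Z k = 0 \<or> Z k = -1)"
proof -
  define u where "u = (\<lambda>m. if m<n \<and> m\<noteq>k then 1 else (0::int))"
  have "u \<in> zvec n" by (auto simp: u_def zvec_def)
  from COVER[OF P this] obtain Z f where Z: "Z \<in> L" and f: "f \<in> errS n (n-2) 1"
    and eq: "\<forall>i. u i = Z i + f i" by blast
  have fv: "\<And>i. i<n \<Longrightarrow> f i = 0 \<or> f i = 1" using errS_vals[OF f] by blast
  have Zo: "\<And>m. m<n \<Longrightarrow> m\<noteq>k \<Longrightarrow> Z m = 1 - f m"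
  proof -
    fix m assume "m<n" "m\<noteq>k" then show "Z m = 1 - f m" using eq[rule_format, of m] by (simp add: u_def)
  qed
  have Zk: "Z k = - f k" using eq[rule_format, of k] by (simp add: u_def)
  show ?thesis
  proof (cases "\<exists>m<n. m\<noteq>k \<and> f m \<noteq> 0")
    case True
    then obtain m where m: "m<n" "m\<noteq>k" "f m \<noteq> 0" by blast
    obtain j1 j2 where j: "j1<n" "j2<n" "j1\<noteq>j2" "j1\<noteq>k" "j2\<noteq>k" using two_avoid[OF n4 k k] by blast
    obtain p q where pq: "p<n" "q<n" "p\<noteq>q" "f p = 0" "f q = 0" using zeros2[OF f] n4 by auto
    obtain r where r: "r<n" "r\<noteq>k" "f r = 0" using pq by metis
    have False
    proof (rule NP[OF LA Z, of m k j1 j2 r])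
      show "\<forall>i<n. Z i = -1 \<or> Z i = 0 \<or> Z i = 1"
      proof (intro allI impI)
        fix i assume i: "i<n" show "Z i = -1 \<or> Z i = 0 \<or> Z i = 1"
          using fv[OF i] Zo[OF i] Zk by (cases "i = k") auto
      qed
    qed (use m k j r fv[OF k] fv[OF j(1)] fv[OF j(2)] Zo Zk in \<open>auto\<close>)
    then show ?thesis ..
  next
    case False
    have "\<forall>m<n. m\<noteq>k \<longrightarrow> Z m = 1" using False Zo by auto
    moreover have "Z k = 0 \<or> Z k = -1" using Zk fv[OF k] by auto
    ultimately show ?thesis using Z by blast
  qed
qed

lemma ONE:
  assumes LA: "L \<in> latA n (n-2) 1" and P: "perfect n (n-2) 1 L" and n4: "n \<ge> 4"
  shows "\<exists>X\<in>L. (\<forall>m<n. X m = 1) \<or> (\<exists>i<n. X i = 0 \<and> (\<forall>m<n. m\<noteq>i \<longrightarrow> X m = 1))"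
proof -
  define u where "u = (\<lambda>m. if m<n then 1 else (0::int))"
  have "u \<in> zvec n" by (auto simp: u_def zvec_def)
  from COVER[OF P this] obtain Z f where Z: "Z \<in> L" and f: "f \<in> errS n (n-2) 1"
    and eq: "\<forall>i. u i = Z i + f i" by blast
  have fv: "\<And>i. i<n \<Longrightarrow> f i = 0 \<or> f i = 1" using errS_vals[OF f] by blast
  have Zo: "\<And>m. m<n \<Longrightarrow> Z m = 1 - f m"
  proof -
    fix m assume "m<n" then show "Z m = 1 - f m" using eq[rule_format, of m] by (simp add: u_def)
  qed
  show ?thesis
  proof (cases "\<exists>i<n. f i \<noteq> 0")
    case False
    then show ?thesis using Z Zo by auto
  next
    case True
    then obtain i where i: "i<n" "f i \<noteq> 0" by blast
    show ?thesis
    proof (cases "\<exists>j<n. j\<noteq>i \<and> f j \<noteq> 0")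
      case True
      then obtain j where j: "j<n" "j\<noteq>i" "f j \<noteq> 0" by blast
      obtain p q where pq: "p<n" "q<n" "p\<noteq>q" "f p = 0" "f q = 0" using zeros2[OF f] n4 by auto
      have False
      proof (rule NP[OF LA Z, of i j 0 1 p])
        show "\<forall>i<n. Z i = -1 \<or> Z i = 0 \<or> Z i = 1"
        proof (intro allI impI)
          fix m assume m: "m<n" show "Z m = -1 \<or> Z m = 0 \<or> Z m = 1" using fv[OF m] Zo[OF m] by auto
        qed
      qed (use i j pq n4 Zo[OF i(1)] Zo[OF j(1)] Zo[OF pq(1)] fv[OF i(1)] fv[OF j(1)] Zo[of 0] Zo[of 1] fv[of 0] fv[of 1] in \<open>auto\<close>)
      then show ?thesis ..
    next
      case False
      have "\<forall>m<n. m\<noteq>i \<longrightarrow> Z m = 1" using False Zo by auto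
      moreover have "Z i = 0" using Zo[OF i(1)] fv[OF i(1)] i(2) by auto
      ultimately show ?thesis using Z i(1) by blast
    qed
  qed
qed

theorem mainTheorem6:
  fixes n :: nat
  assumes "n \<ge> 4"
  shows "\<not> (\<exists>L \<in> latA n (n - 2) 1. perfect n (n - 2) 1 L)"
proof
  assume "\<exists>L \<in> latA n (n - 2) 1. perfect n (n - 2) 1 L"
  then obtain L where LA: "L \<in> latA n (n-2) 1" and P: "perfect n (n-2) 1 L" by blast
  have n4: "n \<ge> 4" by (rule assms)
  have lat: "is_lattice n L" using LA unfolding latA_def by auto
  from ONE[OF LA P n4] obtain X where XL: "X \<in> L"
    and XC: "(\<forall>m<n. X m = 1) \<or> (\<exists>i<n. X i = 0 \<and> (\<forall>m<n. m\<noteq>i \<longrightarrow> X m = 1))" by blast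
  from XC show False
  proof
    assume X1: "\<forall>m<n. X m = 1"
    obtain Z0 where Z0: "Z0 \<in> L" "\<forall>m<n. m\<noteq>0 \<longrightarrow> Z0 m = 1" "Z0 0 = 0 \<or> Z0 0 = -1"
      using COVU[OF LA P n4, of 0] n4 by auto
    obtain Z1 where Z1: "Z1 \<in> L" "\<forall>m<n. m\<noteq>1 \<longrightarrow> Z1 m = 1" "Z1 1 = 0 \<or> Z1 1 = -1"
      using COVU[OF LA P n4, of 1] n4 by auto
    show False
    proof (cases "Z0 0 = 0")
      case True
      have V: "(\<lambda>m. X m - Z0 m) \<in> L" by (rule lat_diff[OF lat XL Z0(1)])
      show False
        by (rule NP[OF LA V, of 1 2 0 1 0]) (use X1 Z0 True n4 in auto)
    next
      case F0: False
      show False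
      proof (cases "Z1 1 = 0")
        case True
        have V: "(\<lambda>m. X m - Z1 m) \<in> L" by (rule lat_diff[OF lat XL Z1(1)])
        show False
          by (rule NP[OF LA V, of 0 2 0 1 1]) (use X1 Z1 True n4 in auto)
      next
        case F1: False
        have V: "(\<lambda>m. (Z0 m + Z1 m) - X m) \<in> L"
          by (rule lat_diff[OF lat lat_add[OF lat Z0(1) Z1(1)] XL])
        show False
        proof (rule NP[OF LA V, of 0 1 2 3 0])
          show "\<forall>m<n. Z0 m + Z1 m - X m = -1 \<or> Z0 m + Z1 m - X m = 0 \<or> Z0 m + Z1 m - X m = 1"
          proof (intro allI impI)
            fix m assume m: "m<n"
            show "Z0 m + Z1 m - X m = -1 \<or> Z0 m + Z1 m - X m = 0 \<or> Z0 m + Z1 m - X m = 1"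
              using m X1 Z0 Z1 F0 F1 by (cases "m = 0"; cases "m = 1") auto
          qed
        qed (use X1 Z0 Z1 F0 F1 n4 in auto)
      qed
    qed
  next
    assume "\<exists>i<n. X i = 0 \<and> (\<forall>m<n. m\<noteq>i \<longrightarrow> X m = 1)"
    then obtain i where i: "i<n" "X i = 0" "\<forall>m<n. m\<noteq>i \<longrightarrow> X m = 1" by blast
    define w where "w = (\<lambda>m. if m<n then (if m = i then -1 else 1) else (0::int))"
    have "w \<in> zvec n" by (auto simp: w_def zvec_def)
    from COVER[OF P this] obtain X2 e where X2: "X2 \<in> L" and e: "e \<in> errS n (n-2) 1"
      and eq: "\<forall>m. w m = X2 m + e m" by blast
    have ev: "\<And>m. m<n \<Longrightarrow> e m = 0 \<or> e m = 1" using errS_vals[OF e] by blast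
    have YL: "(\<lambda>m. X2 m - X m) \<in> L" by (rule lat_diff[OF lat X2 XL])
    have Yi: "X2 i - X i = -1 - e i" using eq[rule_format, of i] i by (simp add: w_def)
    have Yo: "\<And>m. m<n \<Longrightarrow> m\<noteq>i \<Longrightarrow> X2 m - X m = - e m"
    proof -
      fix m assume "m<n" "m\<noteq>i" then show "X2 m - X m = - e m" using eq[rule_format, of m] i(3) by (simp add: w_def)
    qed
    obtain p q where pq: "p<n" "q<n" "p\<noteq>q" "e p = 0" "e q = 0" using zeros2[OF e] n4 by auto
    show False
    proof (cases "e i = 0")
      case True
      obtain k where k: "k<n" "k\<noteq>i" "e k = 0" using pq by metis
      show False
      proof (cases "\<exists>k'<n. k'\<noteq>i \<and> k'\<noteq>k \<and> e k' = 0")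
        case True
        then obtain k' where k': "k'<n" "k'\<noteq>i" "k'\<noteq>k" "e k' = 0" by blast
        show False
        proof (rule NP[OF LA YL, of i k k k' i])
          show "\<forall>m<n. X2 m - X m = -1 \<or> X2 m - X m = 0 \<or> X2 m - X m = 1"
            using ev Yi Yo \<open>e i = 0\<close> by (metis add.inverse_neutral diff_zero)
        qed (use i k k' Yi Yo \<open>e i = 0\<close> in auto)
      next
        case False
        have V: "(\<lambda>m. X m + (X2 m - X m)) \<in> L" by (rule lat_add[OF lat XL YL])
        obtain j where j: "j<n" "j\<noteq>i" "j\<noteq>k" using two_avoid[OF n4 i(1) k(1)] by blast
        have ej: "\<And>m. m<n \<Longrightarrow> m\<noteq>i \<Longrightarrow> m\<noteq>k \<Longrightarrow> e m = 1" using False ev by blast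
        show False
        proof (rule NP[OF LA V, of i j k j i])
          show "\<forall>m<n. X m + (X2 m - X m) = -1 \<or> X m + (X2 m - X m) = 0 \<or> X m + (X2 m - X m) = 1"
          proof (intro allI impI)
            fix m assume m: "m<n"
            show "X m + (X2 m - X m) = -1 \<or> X m + (X2 m - X m) = 0 \<or> X m + (X2 m - X m) = 1"
              using m i k ej[of m] Yi Yo[of m] \<open>e i = 0\<close> by (cases "m = i"; cases "m = k") auto
          qed
        qed (use i k j ej Yi Yo \<open>e i = 0\<close> in auto)
      qed
    next
      case ei: False
      then have ei1: "e i = 1" using ev i by blast
      obtain k where k: "k<n" "k\<noteq>i" "e k = 0" using pq ei by metis
      obtain Z where Z: "Z \<in> L" "\<forall>m<n. m\<noteq>k \<longrightarrow> Z m = 1" "Z k = 0 \<or> Z k = -1"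
        using COVU[OF LA P n4 k(1)] by blast
      show False
      proof (cases "Z k = 0")
        case True
        have V: "(\<lambda>m. X m - Z m) \<in> L" by (rule lat_diff[OF lat XL Z(1)])
        obtain j where j: "j<n" "j\<noteq>i" "j\<noteq>k" using two_avoid[OF n4 i(1) k(1)] by blast
        show False
        proof (rule NP[OF LA V, of i j k j i])
          show "\<forall>m<n. X m - Z m = -1 \<or> X m - Z m = 0 \<or> X m - Z m = 1"
          proof (intro allI impI)
            fix m assume m: "m<n"
            show "X m - Z m = -1 \<or> X m - Z m = 0 \<or> X m - Z m = 1"
              using m i k Z True by (cases "m = i"; cases "m = k") auto
          qed
        qed (use i k j Z True in auto)
      next
        case False
        then have Zk: "Z k = -1" using Z by blast
        have V: "(\<lambda>m. (X2 m - X m) + Z m) \<in> L" by (rule lat_add[OF lat YL Z(1)])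
        obtain j1 j2 where j: "j1<n" "j2<n" "j1\<noteq>j2" "j1\<noteq>i" "j1\<noteq>k" "j2\<noteq>i" "j2\<noteq>k"
          using two_avoid[OF n4 i(1) k(1)] by blast
        show False
        proof (rule NP[OF LA V, of i k j1 j2 i])
          show "\<forall>m<n. (X2 m - X m) + Z m = -1 \<or> (X2 m - X m) + Z m = 0 \<or> (X2 m - X m) + Z m = 1"
          proof (intro allI impI)
            fix m assume m: "m<n"
            show "(X2 m - X m) + Z m = -1 \<or> (X2 m - X m) + Z m = 0 \<or> (X2 m - X m) + Z m = 1"
              using m i k Z Zk Yi Yo[of m] ev[of m] ei1 by (cases "m = i"; cases "m = k") auto
          qed
        qed (use i k j Z Zk Yi Yo ev[OF j(1)] ev[OF j(2)] ei1 in auto)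
      qed
    qed
  qed
qed

end
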